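(* Let $K,L\subset\mathbb{R}^n$ be nonempty compact convex sets. There exist $p\in K$ and $q\in L$ such that $|q-p|=d_{\mathcal H}(K,L)$ and either $(p,q]\subset (K\,\widetilde{\cup}\,L)\setminus K$ or $[p,q)\subset (K\,\widetilde{\cup}\,L)\setminus L$. Moreover, in the first case there exists a hyperplane orthogonal to $[p,q]$ passing through $p$ which supports $K$, and in the second case there exists a hyperplane orthogonal to $[p,q]$ passing through $q$ which supports $L$.
   Context: $K\,\widetilde{\cup}\,L$ denotes the closed convex hull of $K\cup L$. For points $p,q$, $[p,q]$ is the closed segment between them, $[p,q)=[p,q]\setminus\{q\}$ and $(p,q]=[p,q]\setminus\{p\}$. $d_{\mathcal H}$ is the Hausdorff distance: $d_{\mathcal H}(K,L)=\max\{\sup_{x\in K}d(x,L),\sup_{y\in L}d(y,K)\}$, with $d(x,L)=\min\{|x-y|:y\in L\}$. A hyperplane supports a convex set if it meets the set and the set lies in one of its closed half-spaces. *)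

theory Defs
  imports "HOL-Analysis.Analysis"
begin

definition hausdorff_dist :: "'a::metric_space set \<Rightarrow> 'a set \<Rightarrow> real" where
  "hausdorff_dist K L = max (SUP x\<in>K. infdist x L) (SUP y\<in>L. infdist y K)"

definition is_hyperplane :: "'a::euclidean_space set \<Rightarrow> bool" where
  "is_hyperplane H \<longleftrightarrow> (\<exists>a b. a \<noteq> 0 \<and> H = {x. a \<bullet> x = b})"

definition supports :: "'a::euclidean_space set \<Rightarrow> 'a set \<Rightarrow> bool" where
  "supports H S \<longleftrightarrow> H \<inter> S \<noteq> {} \<and>
     (\<exists>a b. a \<noteq> 0 \<and> H = {x. a \<bullet> x = b} \<and>
        (S \<subseteq> {x. a \<bullet> x \<le> b} \<or> S \<subseteq> {x. a \<bullet> x \<ge> b}))"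

definition orth_to_segment :: "'a::euclidean_space set \<Rightarrow> 'a \<Rightarrow> 'a \<Rightarrow> bool" where
  "orth_to_segment H p q \<longleftrightarrow> (\<forall>u\<in>H. \<forall>v\<in>H. (u - v) \<bullet> (q - p) = 0)"

end

theory Submission
  imports Defs
begin

definition concl :: "'a::euclidean_space set \<Rightarrow> 'a set \<Rightarrow> bool" where
  "concl K L \<longleftrightarrow> (\<exists>p\<in>K. \<exists>q\<in>L. dist p q = hausdorff_dist K L \<and>
     (closed_segment p q - {p} \<subseteq> closure (convex hull (K \<union> L)) - K \<or>
      closed_segment p q - {q} \<subseteq> closure (convex hull (K \<union> L)) - L) \<and>
     (closed_segment p q - {p} \<subseteq> closure (convex hull (K \<union> L)) - K \<longrightarrow>
        (\<exists>H. is_hyperplane H \<and> orth_to_segment H p q \<and> p \<in> H \<and> supports H K)) \<and>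
     (closed_segment p q - {q} \<subseteq> closure (convex hull (K \<union> L)) - L \<longrightarrow>
        (\<exists>H. is_hyperplane H \<and> orth_to_segment H p q \<and> q \<in> H \<and> supports H L)))"

lemma hd_sym: "hausdorff_dist K L = hausdorff_dist L K"
  unfolding hausdorff_dist_def by (simp add: max.commute)

lemma orth_sym: "orth_to_segment H p q = orth_to_segment H q p"
  unfolding orth_to_segment_def by (metis inner_minus_right minus_diff_eq neg_equal_0_iff_equal)

lemma concl_sym: "concl L K \<Longrightarrow> concl K L"
  unfolding concl_def
  apply (elim bexE conjE)
  subgoal for p q
    apply (rule bexI[of _ q], rule bexI[of _ p])
    using hd_sym[of K L] orth_sym[of _ p q]
    by (auto simp: dist_commute closed_segment_commute[of p q] Un_commute)
  done

lemma degen: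
  fixes K :: "'a::euclidean_space set"
  assumes "compact K" "K \<noteq> {}"
  shows "\<exists>p\<in>K. \<exists>H. is_hyperplane H \<and> p \<in> H \<and> supports H K"
proof -
  obtain a :: 'a where a: "a \<in> Basis" using nonempty_Basis by blast
  then have a0: "a \<noteq> 0" by auto
  have "continuous_on K (\<lambda>x. a \<bullet> x)" by (intro continuous_intros)
  then obtain p where p: "p \<in> K" "\<forall>y\<in>K. a \<bullet> y \<le> a \<bullet> p"
    using continuous_attains_sup[OF assms] by blast
  define H where "H = {x. a \<bullet> x = a \<bullet> p}"
  have "is_hyperplane H" unfolding is_hyperplane_def H_def using a0 by blast
  moreover have "supports H K" unfolding supports_def H_def using a0 p by blast
  ultimately show ?thesis using p H_def by blast
qed

lemma core:
  fixes K L :: "'a::euclidean_space set"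
  assumes K: "compact K" "convex K" "K \<noteq> {}"
    and L: "compact L" "convex L" "L \<noteq> {}"
    and p: "p \<in> K" "\<forall>x\<in>K. infdist x L \<le> infdist p L" "\<forall>y\<in>L. infdist y K \<le> infdist p L"
  shows "concl K L"
proof -
  have bK: "bdd_above ((\<lambda>x. infdist x L) ` K)" using p(2) by (auto intro: bdd_aboveI)
  have bL: "bdd_above ((\<lambda>x. infdist x K) ` L)" using p(3) by (auto intro: bdd_aboveI)
  have s1: "(SUP x\<in>K. infdist x L) = infdist p L"
    by (rule cSup_eq_maximum) (use p in auto)
  have s2: "(SUP y\<in>L. infdist y K) \<le> infdist p L"
    by (rule cSUP_least) (use L p in auto)
  have hd: "hausdorff_dist K L = infdist p L"
    unfolding hausdorff_dist_def using s1 s2 by simp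
  obtain q where q: "q \<in> L" "\<And>y. y \<in> L \<Longrightarrow> dist p q \<le> dist p y"
    using distance_attains_inf[of L p] L compact_imp_closed by blast
  have dq: "infdist p L = dist p q"
  proof (rule antisym)
    show "infdist p L \<le> dist p q" using infdist_le[OF q(1)] .
    show "dist p q \<le> infdist p L" unfolding infdist_def using L q
      by (auto intro!: cINF_greatest)
  qed
  show ?thesis
  proof (cases "p = q")
    case True
    then have z: "infdist p L = 0" using dq by simp
    have "K \<subseteq> L"
    proof
      fix x assume "x \<in> K"
      then have "infdist x L = 0" using p(2) z infdist_nonneg[of x L] by force
      then show "x \<in> L" using in_closed_iff_infdist_zero[of L x] L compact_imp_closed by blast
    qed
    moreover have "L \<subseteq> K"
    proof
      fix x assume "x \<in> L"
      then have "infdist x K = 0" using p(3) z infdist_nonneg[of x K] by force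
      then show "x \<in> K" using in_closed_iff_infdist_zero[of K x] K compact_imp_closed by blast
    qed
    ultimately have KL: "K = L" by blast
    obtain r H where r: "r \<in> K" "is_hyperplane H" "r \<in> H" "supports H K"
      using degen[OF K(1) K(3)] by blast
    have o: "orth_to_segment H r r" unfolding orth_to_segment_def by simp
    show ?thesis unfolding concl_def
      apply (rule bexI[of _ r], rule bexI[of _ r])
      using r o hd z KL by auto
  next
    case False
    have A: "\<forall>y\<in>L. (p - q) \<bullet> (y - q) \<le> 0"
      using any_closest_point_dot[OF L(2) compact_imp_closed[OF L(1)] q(1)] q(2) by blast
    have pq: "(p - q) \<bullet> (p - q) = norm (p - q) * norm (p - q)"
      by (simp add: dot_square_norm power2_eq_square)
    have npq: "norm (p - q) > 0" using False by simp
    have B: "\<forall>k\<in>K. (p - q) \<bullet> (k - p) \<le> 0"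
    proof
      fix k assume k: "k \<in> K"
      obtain y where y: "y \<in> L" "\<And>z. z \<in> L \<Longrightarrow> dist k y \<le> dist k z"
        using distance_attains_inf[of L k] L compact_imp_closed by blast
      have "infdist k L = dist k y"
      proof (rule antisym)
        show "infdist k L \<le> dist k y" using infdist_le[OF y(1)] .
        show "dist k y \<le> infdist k L" unfolding infdist_def using L y
          by (auto intro!: cINF_greatest)
      qed
      then have dky: "norm (k - y) \<le> norm (p - q)" using p(2) k dq by (metis dist_norm)
      have "(p - q) \<bullet> (k - y) \<le> norm (p - q) * norm (k - y)" by (rule norm_cauchy_schwarz)
      also have "\<dots> \<le> norm (p - q) * norm (p - q)" using dky by (simp add: mult_left_mono)
      finally have 1: "(p - q) \<bullet> (k - y) \<le> (p - q) \<bullet> (p - q)" using pq by simp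
      have 2: "(p - q) \<bullet> (y - q) \<le> 0" using A y(1) by blast
      have "(p - q) \<bullet> (k - p) = (p - q) \<bullet> (k - y) + (p - q) \<bullet> (y - q) - (p - q) \<bullet> (p - q)"
        by (simp add: inner_diff_right)
      then show "(p - q) \<bullet> (k - p) \<le> 0" using 1 2 by linarith
    qed
    have segC: "closed_segment p q \<subseteq> closure (convex hull (K \<union> L))"
    proof -
      have "closed_segment p q \<subseteq> convex hull (K \<union> L)"
        using p(1) q(1) by (simp add: closed_segment_subset convex_convex_hull hull_inc)
      then show ?thesis using closure_subset by blast
    qed
    have segL: "closed_segment p q - {q} \<subseteq> closure (convex hull (K \<union> L)) - L"
    proof
      fix x assume x: "x \<in> closed_segment p q - {q}"
      then obtain t where t: "0 \<le> t" "t \<le> 1" "x = (1 - t) *\<^sub>R p + t *\<^sub>R q"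
        unfolding closed_segment_def by auto
      have "t \<noteq> 1" using x t by auto
      have "x - q = (1 - t) *\<^sub>R (p - q)" using t(3) by (simp add: algebra_simps)
      then have "(p - q) \<bullet> (x - q) = (1 - t) * ((p - q) \<bullet> (p - q))" by simp
      moreover have "(p - q) \<bullet> (p - q) > 0" using False by simp
      moreover have "1 - t > 0" using \<open>t \<noteq> 1\<close> t by simp
      ultimately have "(p - q) \<bullet> (x - q) > 0" by simp
      then have "x \<notin> L" using A by force
      then show "x \<in> closure (convex hull (K \<union> L)) - L" using x segC by blast
    qed
    define H1 where "H1 = {x. (q - p) \<bullet> x = (q - p) \<bullet> p}"
    define H2 where "H2 = {x. (p - q) \<bullet> x = (p - q) \<bullet> q}"
    have qp0: "q - p \<noteq> 0" "p - q \<noteq> 0" using False by auto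
    have h1: "is_hyperplane H1" unfolding is_hyperplane_def H1_def using qp0 by blast
    have h2: "is_hyperplane H2" unfolding is_hyperplane_def H2_def using qp0 by blast
    have o1: "orth_to_segment H1 p q" unfolding orth_to_segment_def H1_def
      by (simp add: inner_diff_left inner_commute)
    have o2: "orth_to_segment H2 p q" unfolding orth_to_segment_def H2_def
      by (auto simp add: inner_diff_left inner_commute inner_diff_right)
    have sK: "K \<subseteq> {x. (q - p) \<bullet> x \<ge> (q - p) \<bullet> p}"
    proof
      fix k assume "k \<in> K"
      then have "(p - q) \<bullet> (k - p) \<le> 0" using B by blast
      then show "k \<in> {x. (q - p) \<bullet> x \<ge> (q - p) \<bullet> p}"
        by (simp add: inner_diff_left inner_diff_right)
    qed
    have sL: "L \<subseteq> {x. (p - q) \<bullet> x \<le> (p - q) \<bullet> q}"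
    proof
      fix k assume "k \<in> L"
      then have "(p - q) \<bullet> (k - q) \<le> 0" using A by blast
      then show "k \<in> {x. (p - q) \<bullet> x \<le> (p - q) \<bullet> q}"
        by (simp add: inner_diff_left inner_diff_right)
    qed
    have sup1: "supports H1 K" unfolding supports_def
    proof
      show "H1 \<inter> K \<noteq> {}" using p(1) by (auto simp: H1_def)
      show "\<exists>a b. a \<noteq> 0 \<and> H1 = {x. a \<bullet> x = b} \<and> (K \<subseteq> {x. a \<bullet> x \<le> b} \<or> K \<subseteq> {x. a \<bullet> x \<ge> b})"
        using qp0 sK unfolding H1_def by blast
    qed
    have sup2: "supports H2 L" unfolding supports_def
    proof
      show "H2 \<inter> L \<noteq> {}" using q(1) by (auto simp: H2_def)
      show "\<exists>a b. a \<noteq> 0 \<and> H2 = {x. a \<bullet> x = b} \<and> (L \<subseteq> {x. a \<bullet> x \<le> b} \<or> L \<subseteq> {x. a \<bullet> x \<ge> b})"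
        using qp0 sL unfolding H2_def by blast
    qed
    show ?thesis unfolding concl_def
      apply (rule bexI[of _ p], rule bexI[of _ q])
      using hd dq segL h1 h2 o1 o2 sup1 sup2 p(1) q(1)
      by (auto simp: H1_def H2_def)
  qed
qed

theorem lemma3p3:
  fixes K L :: "'a::euclidean_space set"
  assumes "compact K" "convex K" "K \<noteq> {}"
    and "compact L" "convex L" "L \<noteq> {}"
  shows "\<exists>p\<in>K. \<exists>q\<in>L. dist p q = hausdorff_dist K L \<and>
     (closed_segment p q - {p} \<subseteq> closure (convex hull (K \<union> L)) - K \<or>
      closed_segment p q - {q} \<subseteq> closure (convex hull (K \<union> L)) - L) \<and>
     (closed_segment p q - {p} \<subseteq> closure (convex hull (K \<union> L)) - K \<longrightarrow>
        (\<exists>H. is_hyperplane H \<and> orth_to_segment H p q \<and> p \<in> H \<and> supports H K)) \<and>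
     (closed_segment p q - {q} \<subseteq> closure (convex hull (K \<union> L)) - L \<longrightarrow>
        (\<exists>H. is_hyperplane H \<and> orth_to_segment H p q \<and> q \<in> H \<and> supports H L))"
proof -
  have c1: "continuous_on K (\<lambda>x. infdist x L)" by (intro continuous_intros)
  have c2: "continuous_on L (\<lambda>x. infdist x K)" by (intro continuous_intros)
  obtain p where p: "p \<in> K" "\<forall>x\<in>K. infdist x L \<le> infdist p L"
    using continuous_attains_sup[OF assms(1,3) c1] by blast
  obtain q where q: "q \<in> L" "\<forall>x\<in>L. infdist x K \<le> infdist q K"
    using continuous_attains_sup[OF assms(4,6) c2] by blast
  have "concl K L"
  proof (cases "infdist q K \<le> infdist p L")
    case True
    then show ?thesis using core[OF assms p(1)] p q by fastforce
  next
    case False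
    then have "concl L K" using core[OF assms(4-6) assms(1-3) q(1)] p q by fastforce
    then show ?thesis by (rule concl_sym)
  qed
  then show ?thesis unfolding concl_def .
qed

end
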